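(* Suppose $\hat{\mathbf h}[t]$ (jointly with $\mathbf h[t]$) is i.i.d. across time and the problem $\max\{\sum_{s=1}^S U_s(x_s):\mathbf x\in\Lambda_{out}\}$ has a feasible solution; let $opt^*$ denote its optimal value. Then for every $\delta>0$ there exists an $\hat{\mathbf h}$-only stationary randomized control scheme $\{x_s^*,P^*[t],c^*[t]\}$ with $0\le P^*[t]\le P_{peak}$ and $0\le x_s^*\le D_s$ such that $$opt^*\le\sum_{s=1}^S U_s(x_s^* )+\delta,\qquad x_s^*\le E\{I(h_s[t],P^*[t])K1_{\{c^*[t]=s\}}\}+\delta\ \ \forall s,\qquad E\{P^*[t]\}\le P_{av}+\delta.$$
   Context: Setting: slotted time; $S$ receivers; true channel $\mathbf h[t]=(h_1[t],\dots,h_S[t])$ and transmitter-side estimate $\hat{\mathbf h}[t]$, with $(h_s[t],\hat h_s[t])$ i.i.d. over $t$ and independent over $s$. Power $0\le P[t]\le P_{peak}$; $I(h_s,P)$ is the per-symbol mutual information, nondecreasing and concave in $P$, $I(h_s,0)=0$, $I(h_s,P_{peak})\le I_{\max}$ w.p.1; $K$ symbols per packet; $c[t]\in\{0,1,\dots,S\}$ is the scheduled receiver (0 = none). Utilities $U_s$ are concave, nondecreasing, continuously differentiable, $U_s(0)=0$, $U_s'(0)=b_s<\infty$; $D_s>0$, $P_{av}>0$ given. Region $\Lambda_{out}$: the set of $\mathbf x=(x_1,\dots,x_S)$ for which there is a scheme $\{c[t],P[t]\}$ whose decisions are determined by the past and $\hat{\mathbf h}[t]$ (not $\mathbf h[t]$)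 with, w.p.1, $x_s\le\liminf_{T\to\infty}\frac1T\sum_{t=0}^{T-1}I(h_s[t],P[t])K1_{\{c[t]=s\}}$, $0\le x_s\le D_s$, $\limsup_{T}\frac1T\sum_{t<T}P[t]\le P_{av}$, and $0\le P[t]\le P_{peak}$. An $\hat{\mathbf h}$-only stationary randomized scheme consists of constants $x_s^*$ and, in each slot $t$, a choice $(c^*[t],P^*[t])$ drawn randomly as a function of $\hat{\mathbf h}[t]$ only, with the same conditional distribution given $\hat{\mathbf h}[t]$ in every slot and independently of the past; expectations are then the same for every $t$. *)

theory Defs
  imports "HOL-Probability.Probability"
begin

text \<open>Channel state of one slot: for each receiver s in {1..S} a pair (h_s, hat h_s).
  Independence over s is built in: the slot distribution is the product of the
  per-receiver distributions mu s.\<close>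
definition slot_meas :: "nat \<Rightarrow> (nat \<Rightarrow> ('h \<times> 'e) measure) \<Rightarrow> (nat \<Rightarrow> 'h \<times> 'e) measure" where
  "slot_meas S \<mu> = PiM {1..S} \<mu>"

text \<open>i.i.d. over time: the path space is the infinite product of the slot distribution.\<close>
definition path_meas :: "nat \<Rightarrow> (nat \<Rightarrow> ('h \<times> 'e) measure) \<Rightarrow> (nat \<Rightarrow> nat \<Rightarrow> 'h \<times> 'e) measure" where
  "path_meas S \<mu> = PiM UNIV (\<lambda>_::nat. slot_meas S \<mu>)"

definition est_of :: "nat \<Rightarrow> (nat \<Rightarrow> 'h \<times> 'e) \<Rightarrow> (nat \<Rightarrow> 'e)" where
  "est_of S w = (\<lambda>s\<in>{1..S}. snd (w s))"

definition est_space :: "nat \<Rightarrow> 'e measure \<Rightarrow> (nat \<Rightarrow> 'e) measure" where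
  "est_space S E = PiM {1..S} (\<lambda>_. E)"

text \<open>The region Lambda_out: schemes whose decisions at slot t depend only on the
  past channel states (slots < t) and the current estimate hat h[t].\<close>
definition Lambda_out ::
  "nat \<Rightarrow> (nat \<Rightarrow> ('h \<times> 'e) measure) \<Rightarrow> ('h \<Rightarrow> real \<Rightarrow> real) \<Rightarrow> nat
   \<Rightarrow> (nat \<Rightarrow> real) \<Rightarrow> real \<Rightarrow> real \<Rightarrow> (nat \<Rightarrow> real) set" where
  "Lambda_out S \<mu> I K Dm Ppeak Pav =
    {x. \<exists>(c :: nat \<Rightarrow> (nat \<Rightarrow> nat \<Rightarrow> 'h \<times> 'e) \<Rightarrow> nat) (P :: nat \<Rightarrow> (nat \<Rightarrow> nat \<Rightarrow> 'h \<times> 'e) \<Rightarrow> real).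
       (\<forall>t. c t \<in> path_meas S \<mu> \<rightarrow>\<^sub>M count_space UNIV) \<and>
       (\<forall>t. P t \<in> borel_measurable (path_meas S \<mu>)) \<and>
       (\<forall>t. \<forall>\<omega>\<in>space (path_meas S \<mu>). c t \<omega> \<le> S \<and> 0 \<le> P t \<omega> \<and> P t \<omega> \<le> Ppeak) \<and>
       (\<forall>t. \<forall>\<omega>\<in>space (path_meas S \<mu>). \<forall>\<omega>'\<in>space (path_meas S \<mu>).
          (\<forall>\<tau><t. \<omega> \<tau> = \<omega>' \<tau>) \<and> est_of S (\<omega> t) = est_of S (\<omega>' t)
          \<longrightarrow> c t \<omega> = c t \<omega>' \<and> P t \<omega> = P t \<omega>') \<and>
       (\<forall>s\<in>{1..S}. 0 \<le> x s \<and> x s \<le> Dm s) \<and>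
       (AE \<omega> in path_meas S \<mu>.
          (\<forall>s\<in>{1..S}. ereal (x s) \<le> liminf (\<lambda>T. ereal (1 / real T *
              (\<Sum>t<T. if c t \<omega> = s then I (fst (\<omega> t s)) (P t \<omega>) * real K else 0)))) \<and>
          limsup (\<lambda>T. ereal (1 / real T * (\<Sum>t<T. P t \<omega>))) \<le> ereal Pav)}"

end

theory Submission
  imports Defs
begin

lemma fatou_real:
  fixes f :: "nat \<Rightarrow> 'a \<Rightarrow> real"
  assumes M: "prob_space M"
    and int: "\<And>n. integrable M (f n)"
    and nn: "\<And>n. AE \<omega> in M. 0 \<le> f n \<omega>"
    and ev: "AE \<omega> in M. \<forall>\<epsilon>>0. eventually (\<lambda>n. a - \<epsilon> < f n \<omega>) sequentially"
    and eps: "\<epsilon> > 0"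
  shows "eventually (\<lambda>n. a - \<epsilon> < integral\<^sup>L M (f n)) sequentially"
proof (cases "a - \<epsilon> < 0")
  case True
  have "0 \<le> integral\<^sup>L M (f n)" for n using nn by (intro integral_nonneg_AE) auto
  then show ?thesis using True by (intro always_eventually allI) (smt (verit))
next
  case False
  interpret prob_space M by fact
  have a0: "0 < a" using False eps by auto
  have pw: "ennreal a \<le> liminf (\<lambda>n. ennreal (f n \<omega>))"
    if h: "\<forall>\<epsilon>>0. eventually (\<lambda>n. a - \<epsilon> < f n \<omega>) sequentially" for \<omega>
  proof (subst le_Liminf_iff, intro allI impI)
    fix y assume y: "y < ennreal a"
    then obtain r where r: "y = ennreal r" "0 \<le> r"
      by (cases y) auto
    with y have "r < a" by (auto simp: ennreal_less_iff)
    then have "eventually (\<lambda>n. a - (a - r) < f n \<omega>) sequentially" using h by (metis diff_gt_0_iff_gt)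
    then show "eventually (\<lambda>n. y < ennreal (f n \<omega>)) sequentially"
      by eventually_elim (use r in \<open>auto intro!: ennreal_lessI\<close>)
  qed
  have "ennreal a = (\<integral>\<^sup>+ \<omega>. ennreal a \<partial>M)" by (simp add: emeasure_space_1)
  also have "\<dots> \<le> (\<integral>\<^sup>+ \<omega>. liminf (\<lambda>n. ennreal (f n \<omega>)) \<partial>M)"
    using ev by (intro nn_integral_mono_AE) (rule AE_mp[OF ev], intro AE_I2 impI pw, simp)
  also have "\<dots> \<le> liminf (\<lambda>n. \<integral>\<^sup>+ \<omega>. ennreal (f n \<omega>) \<partial>M)"
    using int by (intro nn_integral_liminf) auto
  also have "(\<lambda>n. \<integral>\<^sup>+ \<omega>. ennreal (f n \<omega>) \<partial>M) = (\<lambda>n. ennreal (integral\<^sup>L M (f n)))"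
    using int nn by (intro ext nn_integral_eq_integral) auto
  finally have "ennreal (a - \<epsilon>) < liminf (\<lambda>n. ennreal (integral\<^sup>L M (f n)))"
    using a0 eps by (auto intro: less_le_trans[OF ennreal_lessI])
  then have "eventually (\<lambda>n. ennreal (a - \<epsilon>) < ennreal (integral\<^sup>L M (f n))) sequentially"
    by (rule less_LiminfD)
  then show ?thesis
    by eventually_elim (use False in \<open>auto simp: ennreal_less_iff\<close>)
qed


lemma meas_h:
  fixes t :: nat
  assumes mu: "\<forall>s\<in>{1..S}. sets (\<mu> s) = sets (H \<Otimes>\<^sub>M E)" and s: "s \<in> {1..S}"
  shows "(\<lambda>\<omega>. fst (\<omega> t s)) \<in> PiM UNIV (\<lambda>_. PiM {1..S} \<mu>) \<rightarrow>\<^sub>M H"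
proof -
  have 1: "(\<lambda>\<omega>. \<omega> t s) \<in> PiM UNIV (\<lambda>_. PiM {1..S} \<mu>) \<rightarrow>\<^sub>M \<mu> s"
    using measurable_compose[OF measurable_component_singleton[of t UNIV] measurable_component_singleton[OF s]] by simp
  have 2: "fst \<in> \<mu> s \<rightarrow>\<^sub>M H"
    using mu s by (subst measurable_cong_sets[of _ "H \<Otimes>\<^sub>M E" H H]) auto
  show ?thesis using measurable_compose[OF 1 2] by simp
qed

lemma meas_rep:
  fixes t :: nat and \<mu> :: "nat \<Rightarrow> ('h \<times> 'e) measure" and E :: "'e measure"
  assumes mu: "\<forall>s\<in>{1..S}. sets (\<mu> s) = sets (H \<Otimes>\<^sub>M E)"
  shows "(\<lambda>(e, \<omega>). (fun_upd \<omega> t (\<lambda>s\<in>{1..S}. (fst (\<omega> t s), e s)))) \<in>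
    (PiM {1..S} (\<lambda>_. E)) \<Otimes>\<^sub>M (PiM UNIV (\<lambda>_. PiM {1..S} \<mu>)) \<rightarrow>\<^sub>M PiM UNIV (\<lambda>_. PiM {1..S} \<mu>)"
proof -
  let ?M = "(PiM {1..S} (\<lambda>_. E)) \<Otimes>\<^sub>M (PiM UNIV (\<lambda>_. PiM {1..S} \<mu>))"
  have sp: "space (\<mu> s) = space H \<times> space E" if "s \<in> {1..S}" for s
    using mu that sets_eq_imp_space_eq[of "\<mu> s" "H \<Otimes>\<^sub>M E"] by (simp add: space_pair_measure)
  have comp: "(\<lambda>z. (\<lambda>s\<in>{1..S}. (fst (snd z t s), fst z s))) \<in> ?M \<rightarrow>\<^sub>M PiM {1..S} \<mu>"
  proof (rule measurable_restrict)
    fix s assume s: "s \<in> {1..S}"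
    have a: "(\<lambda>z. fst (snd z t s)) \<in> ?M \<rightarrow>\<^sub>M H"
      using measurable_compose[OF measurable_snd[of "PiM {1..S} (\<lambda>_. E)"] meas_h[OF mu s, where t=t]] by simp
    have b: "(\<lambda>z. fst z s) \<in> ?M \<rightarrow>\<^sub>M E"
      using s by measurable
    show "(\<lambda>z. (fst (snd z t s), fst z s)) \<in> ?M \<rightarrow>\<^sub>M \<mu> s"
      using mu s measurable_Pair[OF a b] by (subst measurable_cong_sets[of _ ?M _ "H \<Otimes>\<^sub>M E"]) auto
  qed
  have eq: "(\<lambda>(e, \<omega>). (fun_upd \<omega> t (\<lambda>s\<in>{1..S}. (fst (\<omega> t s), e s)))) =
    (\<lambda>z i. if i = t then (\<lambda>s\<in>{1..S}. (fst (snd z t s), fst z s)) else snd z i)"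
    by (auto simp: fun_eq_iff)
  show ?thesis unfolding eq
  proof (rule measurable_PiM_single')
    fix i :: nat
    show "(\<lambda>z. if i = t then (\<lambda>s\<in>{1..S}. (fst (snd z t s), fst z s)) else snd z i) \<in> ?M \<rightarrow>\<^sub>M PiM {1..S} \<mu>"
    proof (cases "i = t")
      case True then show ?thesis using comp by simp
    next
      case False
      have "(\<lambda>z. snd z i) \<in> ?M \<rightarrow>\<^sub>M PiM {1..S} \<mu>"
        using measurable_compose[OF measurable_snd measurable_component_singleton[of i UNIV "\<lambda>_. PiM {1..S} \<mu>"]] by simp
      then show ?thesis using False by simp
    qed
  next
    show "(\<lambda>z i. if i = t then (\<lambda>s\<in>{1..S}. (fst (snd z t s), fst z s)) else snd z i) \<in> space ?M \<rightarrow> (\<Pi>\<^sub>E i\<in>UNIV. space (PiM {1..S} \<mu>))"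
    proof (rule Pi_I, rule PiE_I)
      fix z :: "(nat \<Rightarrow> 'e) \<times> (nat \<Rightarrow> nat \<Rightarrow> 'h \<times> 'e)" and i :: nat assume z: "z \<in> space ?M"
      have "snd z \<in> space (PiM UNIV (\<lambda>_. PiM {1..S} \<mu>))" using measurable_space[OF measurable_snd z] .
      then have "snd z i \<in> space (PiM {1..S} \<mu>)"
        using measurable_space[OF measurable_component_singleton[of i UNIV "\<lambda>_. PiM {1..S} \<mu>"]] by simp
      then show "(if i = t then (\<lambda>s\<in>{1..S}. (fst (snd z t s), fst z s)) else snd z i) \<in> space (PiM {1..S} \<mu>)"
        using measurable_space[OF comp z] by simp
    qed simp
  qed
qed


lemma meas_upd':
  fixes t :: nat and M :: "'a measure"
  shows "(\<lambda>z i. if i = t then fst z else snd z i) \<in> M \<Otimes>\<^sub>M (PiM (UNIV :: nat set) (\<lambda>_. M)) \<rightarrow>\<^sub>M PiM (UNIV :: nat set) (\<lambda>_. M)"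
proof (rule measurable_PiM_single')
  fix i :: nat
  show "(\<lambda>z. if i = t then fst z else snd z i) \<in> M \<Otimes>\<^sub>M (PiM (UNIV :: nat set) (\<lambda>_. M)) \<rightarrow>\<^sub>M M"
  proof (cases "i = t")
    case True then show ?thesis by simp
  next
    case False
    have "(\<lambda>z. snd z i) \<in> M \<Otimes>\<^sub>M (PiM (UNIV :: nat set) (\<lambda>_. M)) \<rightarrow>\<^sub>M M"
      using measurable_compose[OF measurable_snd measurable_component_singleton[of i UNIV "\<lambda>_. M"]] by simp
    then show ?thesis using False by simp
  qed
next
  show "(\<lambda>z i. if i = t then fst z else snd z i) \<in> space (M \<Otimes>\<^sub>M (PiM (UNIV :: nat set) (\<lambda>_. M))) \<rightarrow> (\<Pi>\<^sub>E i\<in>UNIV. space M)"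
  proof (rule Pi_I, rule PiE_I)
    fix z :: "'a \<times> (nat \<Rightarrow> 'a)" and i :: nat assume z: "z \<in> space (M \<Otimes>\<^sub>M (PiM (UNIV :: nat set) (\<lambda>_. M)))"
    have "snd z \<in> space (PiM (UNIV :: nat set) (\<lambda>_. M))" using measurable_space[OF measurable_snd z] .
    then have "snd z i \<in> space M"
      using measurable_space[OF measurable_component_singleton[of i UNIV "\<lambda>_. M"]] by simp
    moreover have "fst z \<in> space M" using measurable_space[OF measurable_fst z] .
    ultimately show "(if i = t then fst z else snd z i) \<in> space M" by simp
  qed simp
qed

lemma meas_upd:
  fixes t :: nat and M :: "'a measure"
  shows "(\<lambda>(x, X). fun_upd X t x) \<in> M \<Otimes>\<^sub>M (PiM (UNIV :: nat set) (\<lambda>_. M)) \<rightarrow>\<^sub>M PiM (UNIV :: nat set) (\<lambda>_. M)"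
proof -
  have eq: "(\<lambda>(x, X). fun_upd X t x) = (\<lambda>z i. if i = t then fst z else snd z i)"
    by (auto simp: fun_eq_iff)
  show ?thesis unfolding eq by (rule meas_upd')
qed

theorem lemma4:
  fixes S K :: nat
    and H :: "'h measure" and E :: "'e measure"
    and \<mu> :: "nat \<Rightarrow> ('h \<times> 'e) measure"
    and I :: "'h \<Rightarrow> real \<Rightarrow> real"
    and U U' :: "nat \<Rightarrow> real \<Rightarrow> real"
    and Dm :: "nat \<Rightarrow> real"
    and Ppeak Pav Imax \<delta> :: real
  assumes mu: "\<forall>s\<in>{1..S}. prob_space (\<mu> s) \<and> sets (\<mu> s) = sets (H \<Otimes>\<^sub>M E)"
    and I_meas: "(\<lambda>(h, p). I h p) \<in> borel_measurable (H \<Otimes>\<^sub>M borel)"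
    and I_mono: "\<forall>h\<in>space H. mono_on {0..Ppeak} (I h)"
    and I_concave: "\<forall>h\<in>space H. concave_on {0..Ppeak} (I h)"
    and I_zero: "\<forall>h\<in>space H. I h 0 = 0"
    and I_bound: "\<forall>s\<in>{1..S}. AE w in \<mu> s. I (fst w) Ppeak \<le> Imax"
    and K_pos: "K > 0"
    and Ppeak: "0 \<le> Ppeak"
    and Pav: "0 < Pav"
    and Dm_pos: "\<forall>s\<in>{1..S}. 0 < Dm s"
    and U: "\<forall>s\<in>{1..S}. concave_on {0..} (U s) \<and> mono_on {0..} (U s) \<and> U s 0 = 0 \<and>
              (\<forall>x\<ge>0. (U s has_real_derivative U' s x) (at x within {0..})) \<and>
              continuous_on {0..} (U' s)"
    and feasible: "Lambda_out S \<mu> I K Dm Ppeak Pav \<noteq> {}"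
    and delta: "\<delta> > 0"
  shows "\<exists>(xs :: nat \<Rightarrow> real) (\<kappa> :: (nat \<Rightarrow> 'e) \<Rightarrow> (nat \<times> real) measure).
     \<kappa> \<in> est_space S E \<rightarrow>\<^sub>M prob_algebra (count_space UNIV \<Otimes>\<^sub>M borel) \<and>
     (\<forall>e\<in>space (est_space S E). AE cp in \<kappa> e. fst cp \<le> S \<and> 0 \<le> snd cp \<and> snd cp \<le> Ppeak) \<and>
     (\<forall>s\<in>{1..S}. 0 \<le> xs s \<and> xs s \<le> Dm s) \<and>
     (SUP x\<in>Lambda_out S \<mu> I K Dm Ppeak Pav. \<Sum>s=1..S. U s (x s)) \<le> (\<Sum>s=1..S. U s (xs s)) + \<delta> \<and>
     (\<forall>s\<in>{1..S}. xs s \<le>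
        (\<integral>w. (\<integral>cp. (if fst cp = s then I (fst (w s)) (snd cp) * real K else 0) \<partial>\<kappa> (est_of S w))
           \<partial>slot_meas S \<mu>) + \<delta>) \<and>
     (\<integral>w. (\<integral>cp. snd cp \<partial>\<kappa> (est_of S w)) \<partial>slot_meas S \<mu>) \<le> Pav + \<delta>"
proof -
  define SM where "SM = slot_meas S \<mu>"
  define PM where "PM = path_meas S \<mu>"
  define N where "N = (count_space UNIV \<Otimes>\<^sub>M borel :: (nat \<times> real) measure)"
  have mu_prob: "prob_space (\<mu> s)" if "s \<in> {1..S}" for s using mu that by auto
  have mu_sets: "\<forall>s\<in>{1..S}. sets (\<mu> s) = sets (H \<Otimes>\<^sub>M E)" using mu by auto
  have sp_mu: "space (\<mu> s) = space H \<times> space E" if "s \<in> {1..S}" for s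
    using mu that sets_eq_imp_space_eq[of "\<mu> s" "H \<Otimes>\<^sub>M E"] by (simp add: space_pair_measure)
  have SM_eq: "SM = PiM {1..S} \<mu>" by (simp add: SM_def slot_meas_def)
  have PM_eq: "PM = PiM UNIV (\<lambda>_. PiM {1..S} \<mu>)" by (simp add: PM_def path_meas_def slot_meas_def)
  have SMp: "prob_space (PiM {1..S} \<mu>)" by (intro prob_space_PiM mu_prob)
  interpret SM: prob_space SM unfolding SM_eq by (rule SMp)
  have PMp: "prob_space PM" unfolding PM_eq by (intro prob_space_PiM SMp)
  interpret PM: prob_space PM by (rule PMp)
  have spSM: "space SM = (\<Pi>\<^sub>E s\<in>{1..S}. space (\<mu> s))" by (simp add: SM_eq space_PiM)
  have spPM: "space PM = (\<Pi>\<^sub>E t\<in>UNIV. space SM)" by (simp add: PM_eq SM_eq space_PiM)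
  have h_sp: "fst (w s) \<in> space H" "snd (w s) \<in> space E" if "w \<in> space SM" "s \<in> {1..S}" for w s
  proof -
    have "w s \<in> space (\<mu> s)" using PiE_mem[OF that(1)[unfolded spSM] that(2)] .
    then have "w s \<in> space H \<times> space E" using sp_mu[OF that(2)] by (simp only:)
    then show "fst (w s) \<in> space H" "snd (w s) \<in> space E" by (simp_all add: mem_Times_iff)
  qed
  have wt_sp: "\<omega> t \<in> space SM" if "\<omega> \<in> space PM" for \<omega> t
    using PiE_mem[OF that[unfolded spPM] UNIV_I] .
  have I_nn: "0 \<le> I h p" and I_le: "I h p \<le> I h Ppeak" if "h \<in> space H" "0 \<le> p" "p \<le> Ppeak" for h p
  proof -
    have m: "mono_on {0..Ppeak} (I h)" using I_mono that by blast
    have "I h 0 \<le> I h p" by (rule mono_onD[OF m]) (use that in auto)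
    then show "0 \<le> I h p" using I_zero that by auto
    show "I h p \<le> I h Ppeak" by (rule mono_onD[OF m]) (use that in auto)
  qed
  let ?L = "Lambda_out S \<mu> I K Dm Ppeak Pav"
  let ?f = "\<lambda>x. \<Sum>s=1..S. U s (x s)"
  have bnd: "?f x \<le> (\<Sum>s=1..S. U s (Dm s))" if "x \<in> ?L" for x
  proof -
    from that have "\<forall>s\<in>{1..S}. 0 \<le> x s \<and> x s \<le> Dm s" unfolding Lambda_out_def by blast
    then show ?thesis
    proof (intro sum_mono)
      fix s assume r: "\<forall>s\<in>{1..S}. 0 \<le> x s \<and> x s \<le> Dm s" and s: "s \<in> {1..S}"
      have m: "mono_on {0..} (U s)" using U s by blast
      have xs: "0 \<le> x s" "x s \<le> Dm s" using r s by auto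
      show "U s (x s) \<le> U s (Dm s)"
        by (rule mono_onD[OF m]) (use xs in auto)
    qed
  qed
  have bdd: "bdd_above (?f ` ?L)" using bnd by (intro bdd_aboveI) auto
  have "(SUP x\<in>?L. ?f x) - \<delta> < (SUP x\<in>?L. ?f x)" using delta by simp
  then obtain x where xL: "x \<in> ?L" and xU: "(SUP x\<in>?L. ?f x) - \<delta> < ?f x"
    using less_cSUP_iff[OF feasible bdd] by blast
  from xL obtain c :: "nat \<Rightarrow> (nat \<Rightarrow> nat \<Rightarrow> 'h \<times> 'e) \<Rightarrow> nat"
    and P :: "nat \<Rightarrow> (nat \<Rightarrow> nat \<Rightarrow> 'h \<times> 'e) \<Rightarrow> real" where
    c_meas: "\<forall>t. c t \<in> PM \<rightarrow>\<^sub>M count_space UNIV" and P_meas: "\<forall>t. P t \<in> borel_measurable PM"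
    and cP_rng: "\<forall>t. \<forall>\<omega>\<in>space PM. c t \<omega> \<le> S \<and> 0 \<le> P t \<omega> \<and> P t \<omega> \<le> Ppeak"
    and caus: "\<forall>t. \<forall>\<omega>\<in>space PM. \<forall>\<omega>'\<in>space PM.
          (\<forall>\<tau><t. \<omega> \<tau> = \<omega>' \<tau>) \<and> est_of S (\<omega> t) = est_of S (\<omega>' t)
          \<longrightarrow> c t \<omega> = c t \<omega>' \<and> P t \<omega> = P t \<omega>'"
    and x_rng: "\<forall>s\<in>{1..S}. 0 \<le> x s \<and> x s \<le> Dm s"
    and x_AE: "AE \<omega> in PM.
          (\<forall>s\<in>{1..S}. ereal (x s) \<le> liminf (\<lambda>T. ereal (1 / real T *
              (\<Sum>t<T. if c t \<omega> = s then I (fst (\<omega> t s)) (P t \<omega>) * real K else 0)))) \<and>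
          limsup (\<lambda>T. ereal (1 / real T * (\<Sum>t<T. P t \<omega>))) \<le> ereal Pav"
    unfolding Lambda_out_def PM_def mem_Collect_eq by blast
  define Y where "Y s t \<omega> = (if c t \<omega> = s then I (fst (\<omega> t s)) (P t \<omega>) * real K else 0)" for s t \<omega>
  have hP_meas: "(\<lambda>\<omega>. I (fst (\<omega> t s)) (P t \<omega>)) \<in> borel_measurable PM" if s: "s \<in> {1..S}" for s t
  proof -
    have "(\<lambda>\<omega>. (fst (\<omega> t s), P t \<omega>)) \<in> PM \<rightarrow>\<^sub>M H \<Otimes>\<^sub>M borel"
    proof (rule measurable_Pair)
      show "(\<lambda>\<omega>. fst (\<omega> t s)) \<in> PM \<rightarrow>\<^sub>M H" using meas_h[OF mu_sets s, of t] by (simp add: PM_eq)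
      show "P t \<in> borel_measurable PM" using P_meas by blast
    qed
    from measurable_compose[OF this I_meas] show ?thesis by simp
  qed
  have Y_meas: "Y s t \<in> borel_measurable PM" if s: "s \<in> {1..S}" for s t
  proof -
    have A: "{\<omega> \<in> space PM. c t \<omega> = s} \<in> sets PM"
      using measurable_sets[OF c_meas[rule_format, of t], of "{s}"] by (simp add: vimage_def Int_def conj_commute)
    have B: "(\<lambda>\<omega>. I (fst (\<omega> t s)) (P t \<omega>) * real K) \<in> borel_measurable PM"
      using borel_measurable_times[OF hP_meas[OF s, of t] borel_measurable_const] .
    show ?thesis unfolding Y_def
      by (rule measurable_If[OF B borel_measurable_const A])
  qed
  have Y_nn: "0 \<le> Y s t \<omega>" and Y_le: "Y s t \<omega> \<le> I (fst (\<omega> t s)) Ppeak * real K"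
    if "\<omega> \<in> space PM" "s \<in> {1..S}" for s t \<omega>
  proof -
    have h: "fst (\<omega> t s) \<in> space H" using that h_sp wt_sp by blast
    have p: "0 \<le> P t \<omega>" "P t \<omega> \<le> Ppeak" using cP_rng that by auto
    show "0 \<le> Y s t \<omega>" using I_nn[OF h p] by (simp add: Y_def)
    show "Y s t \<omega> \<le> I (fst (\<omega> t s)) Ppeak * real K"
      using I_nn[OF h p] I_le[OF h p] I_nn[OF h, of Ppeak] Ppeak
      by (auto simp: Y_def intro!: mult_right_mono)
  qed
  have Y_AE: "AE \<omega> in PM. I (fst (\<omega> t s)) Ppeak \<le> Imax" if s: "s \<in> {1..S}" for s t
  proof -
    have "AE w in SM. I (fst (w s)) Ppeak \<le> Imax"
      unfolding SM_eq using I_bound s mu_prob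
      by (intro AE_PiM_component[where P="\<lambda>w. I (fst w) Ppeak \<le> Imax"]) simp_all
    then show ?thesis unfolding PM_eq SM_eq[symmetric]
      using SM.prob_space_axioms by (intro AE_PiM_component[where P="\<lambda>w. I (fst (w s)) Ppeak \<le> Imax"]) simp_all
  qed
  have Y_int: "integrable PM (Y s t)" if s: "s \<in> {1..S}" for s t
  proof (rule PM.integrable_const_bound[OF _ Y_meas[OF s]])
    show "AE \<omega> in PM. norm (Y s t \<omega>) \<le> Imax * real K"
      using AE_space Y_AE[OF s, of t]
    proof eventually_elim
      case (elim \<omega>)
      have "0 \<le> Y s t \<omega>" "Y s t \<omega> \<le> I (fst (\<omega> t s)) Ppeak * real K"
        using Y_nn[OF elim(1) s] Y_le[OF elim(1) s] by auto
      moreover have "I (fst (\<omega> t s)) Ppeak * real K \<le> Imax * real K"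
        using elim(2) by (rule mult_right_mono) simp
      ultimately show ?case by simp
    qed
  qed
  have avgY_int: "integrable PM (\<lambda>\<omega>. 1 / real T * (\<Sum>t<T. Y s t \<omega>))" if s: "s \<in> {1..S}" for s T
    using Y_int[OF s] by (intro integrable_mult_right integrable_sum) auto
  have ev_s: "eventually (\<lambda>T. x s - \<delta> < (\<integral>\<omega>. 1 / real T * (\<Sum>t<T. Y s t \<omega>) \<partial>PM)) sequentially"
    if s: "s \<in> {1..S}" for s
  proof -
    have nn: "AE \<omega> in PM. 0 \<le> 1 / real T * (\<Sum>t<T. Y s t \<omega>)" for T
    proof (rule AE_I2)
      fix \<omega> assume "\<omega> \<in> space PM"
      then show "0 \<le> 1 / real T * (\<Sum>t<T. Y s t \<omega>)"
        using Y_nn[OF _ s] by (intro mult_nonneg_nonneg sum_nonneg) auto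
    qed
    have ev: "AE \<omega> in PM. \<forall>\<epsilon>>0. eventually (\<lambda>T. x s - \<epsilon> < 1 / real T * (\<Sum>t<T. Y s t \<omega>)) sequentially"
      using x_AE
    proof eventually_elim
      case (elim \<omega>)
      then have L: "ereal (x s) \<le> liminf (\<lambda>T. ereal (1 / real T * (\<Sum>t<T. Y s t \<omega>)))"
        using s by (simp add: Y_def)
      show ?case
      proof (intro allI impI)
        fix \<epsilon> :: real assume e: "\<epsilon> > 0"
        then have "ereal (x s - \<epsilon>) < ereal (x s)" by simp
        from less_LiminfD[OF less_le_trans[OF this L]]
        show "eventually (\<lambda>T. x s - \<epsilon> < 1 / real T * (\<Sum>t<T. Y s t \<omega>)) sequentially"
          by (rule eventually_mono) simp
      qed
    qed
    show ?thesis by (rule fatou_real[OF PMp avgY_int[OF s] nn ev delta])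
  qed
  have P_int: "integrable PM (P t)" for t
  proof (rule PM.integrable_const_bound[where B=Ppeak])
    show "AE \<omega> in PM. norm (P t \<omega>) \<le> Ppeak"
      by (rule AE_I2) (use cP_rng in auto)
    show "P t \<in> borel_measurable PM" using P_meas by blast
  qed
  have avgP_rng: "0 \<le> 1 / real T * (\<Sum>t<T. P t \<omega>) \<and> 1 / real T * (\<Sum>t<T. P t \<omega>) \<le> Ppeak"
    if "\<omega> \<in> space PM" for \<omega> T
  proof (cases "T = 0")
    case True then show ?thesis using Ppeak by simp
  next
    case False
    have r: "0 \<le> P t \<omega>" "P t \<omega> \<le> Ppeak" for t using cP_rng that by auto
    have "(\<Sum>t<T. P t \<omega>) \<le> of_nat (card {..<T}) * Ppeak"
      by (rule sum_bounded_above) (use r in auto)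
    then have "(\<Sum>t<T. P t \<omega>) \<le> real T * Ppeak" by simp
    moreover have "0 \<le> (\<Sum>t<T. P t \<omega>)" using r by (intro sum_nonneg) auto
    ultimately show ?thesis using False by (auto simp: field_simps)
  qed
  have avgP_int0: "integrable PM (\<lambda>\<omega>. 1 / real T * (\<Sum>t<T. P t \<omega>))" for T
  proof -
    have "integrable PM (\<lambda>\<omega>. \<Sum>t<T. P t \<omega>)" using P_int by (intro Bochner_Integration.integrable_sum) auto
    then show ?thesis
      using integrable_mult_right[of "1 / real T" PM "\<lambda>\<omega>. \<Sum>t<T. P t \<omega>"] by blast
  qed
  have avgP_int: "integrable PM (\<lambda>\<omega>. Ppeak - 1 / real T * (\<Sum>t<T. P t \<omega>))" for T
    by (rule Bochner_Integration.integrable_diff[OF PM.integrable_const avgP_int0])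
  have ev_P: "eventually (\<lambda>T. (\<integral>\<omega>. 1 / real T * (\<Sum>t<T. P t \<omega>) \<partial>PM) < Pav + \<delta>) sequentially"
  proof -
    have nn: "AE \<omega> in PM. 0 \<le> Ppeak - 1 / real T * (\<Sum>t<T. P t \<omega>)" for T
      by (rule AE_I2) (use avgP_rng in auto)
    have ev: "AE \<omega> in PM. \<forall>\<epsilon>>0. eventually (\<lambda>T. (Ppeak - Pav) - \<epsilon> < Ppeak - 1 / real T * (\<Sum>t<T. P t \<omega>)) sequentially"
      using x_AE
    proof eventually_elim
      case (elim \<omega>)
      then have L: "limsup (\<lambda>T. ereal (1 / real T * (\<Sum>t<T. P t \<omega>))) \<le> ereal Pav" by simp
      show ?case
      proof (intro allI impI)
        fix \<epsilon> :: real assume e: "\<epsilon> > 0"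
        then have "ereal Pav < ereal (Pav + \<epsilon>)" by simp
        from Limsup_lessD[OF le_less_trans[OF L this]]
        show "eventually (\<lambda>T. (Ppeak - Pav) - \<epsilon> < Ppeak - 1 / real T * (\<Sum>t<T. P t \<omega>)) sequentially"
          by (rule eventually_mono) simp
      qed
    qed
    have "eventually (\<lambda>T. (Ppeak - Pav) - \<delta> < (\<integral>\<omega>. Ppeak - 1 / real T * (\<Sum>t<T. P t \<omega>) \<partial>PM)) sequentially"
      by (rule fatou_real[OF PMp avgP_int nn ev delta])
    then show ?thesis
    proof (rule eventually_mono)
      fix T assume "(Ppeak - Pav) - \<delta> < (\<integral>\<omega>. Ppeak - 1 / real T * (\<Sum>t<T. P t \<omega>) \<partial>PM)"
      moreover have "(\<integral>\<omega>. Ppeak - 1 / real T * (\<Sum>t<T. P t \<omega>) \<partial>PM) = Ppeak - (\<integral>\<omega>. 1 / real T * (\<Sum>t<T. P t \<omega>) \<partial>PM)"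
        by (subst Bochner_Integration.integral_diff[OF PM.integrable_const avgP_int0]) (simp add: PM.prob_space)
      ultimately show "(\<integral>\<omega>. 1 / real T * (\<Sum>t<T. P t \<omega>) \<partial>PM) < Pav + \<delta>" by simp
    qed
  qed
  have e1: "eventually (\<lambda>T. \<forall>s\<in>{1..S}. x s - \<delta> < (\<integral>\<omega>. 1 / real T * (\<Sum>t<T. Y s t \<omega>) \<partial>PM)) sequentially"
    by (rule eventually_ball_finite) (use ev_s in auto)
  have "eventually (\<lambda>T. (\<forall>s\<in>{1..S}. x s - \<delta> < (\<integral>\<omega>. 1 / real T * (\<Sum>t<T. Y s t \<omega>) \<partial>PM)) \<and>
      (\<integral>\<omega>. 1 / real T * (\<Sum>t<T. P t \<omega>) \<partial>PM) < Pav + \<delta> \<and> 1 \<le> T) sequentially"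
    by (intro eventually_conj e1 ev_P eventually_ge_at_top)
  then obtain T where T_s: "\<forall>s\<in>{1..S}. x s - \<delta> < (\<integral>\<omega>. 1 / real T * (\<Sum>t<T. Y s t \<omega>) \<partial>PM)"
    and T_P: "(\<integral>\<omega>. 1 / real T * (\<Sum>t<T. P t \<omega>) \<partial>PM) < Pav + \<delta>" and T1: "1 \<le> T"
    unfolding eventually_sequentially by blast
  define Tm where "Tm = measure_pmf (pmf_of_set {..<T})"
  define ES where "ES = est_space S E"
  define rep where "rep = (\<lambda>(t::nat) (e::nat \<Rightarrow> 'e) (\<omega>::nat \<Rightarrow> nat \<Rightarrow> 'h \<times> 'e).
     fun_upd \<omega> t (\<lambda>s\<in>{1..S}. (fst (\<omega> t s), e s)))"
  define \<Phi> where "\<Phi> = (\<lambda>e (z::nat \<times> (nat \<Rightarrow> nat \<Rightarrow> 'h \<times> 'e)).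
     (c (fst z) (rep (fst z) e (snd z)), P (fst z) (rep (fst z) e (snd z))))"
  define \<kappa> where "\<kappa> = (\<lambda>e. distr (Tm \<Otimes>\<^sub>M PM) N (\<Phi> e))"
  have ES_eq: "ES = PiM {1..S} (\<lambda>_. E)" by (simp add: ES_def est_space_def)
  have Tm_sets: "sets Tm = sets (count_space UNIV)" by (simp add: Tm_def)
  interpret Tm: prob_space Tm by (simp add: Tm_def measure_pmf.prob_space_axioms)
  interpret TP: pair_prob_space Tm PM by unfold_locales
  interpret SP: pair_prob_space SM PM by unfold_locales
  have TPp: "prob_space (Tm \<Otimes>\<^sub>M PM)" by (rule prob_space_pair[OF Tm.prob_space_axioms PMp])
  have rep_meas: "(\<lambda>(e, \<omega>). rep t e \<omega>) \<in> ES \<Otimes>\<^sub>M PM \<rightarrow>\<^sub>M PM" for t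
    using meas_rep[OF mu_sets, of t] by (simp add: rep_def ES_eq PM_eq)
  have c_meas': "c t \<in> PM \<rightarrow>\<^sub>M count_space UNIV" for t using c_meas by blast
  have P_meas': "P t \<in> PM \<rightarrow>\<^sub>M borel" for t using P_meas by blast
  have \<Phi>_meas: "(\<lambda>(e, z). \<Phi> e z) \<in> ES \<Otimes>\<^sub>M (Tm \<Otimes>\<^sub>M PM) \<rightarrow>\<^sub>M N"
  proof -
    let ?M = "ES \<Otimes>\<^sub>M (Tm \<Otimes>\<^sub>M PM)"
    have each: "(\<lambda>y. (c t (rep t (fst y) (snd (snd y))), P t (rep t (fst y) (snd (snd y))))) \<in> ?M \<rightarrow>\<^sub>M N" for t
    proof -
      have a: "(\<lambda>y. (fst y, snd (snd y))) \<in> ?M \<rightarrow>\<^sub>M ES \<Otimes>\<^sub>M PM"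
        by (rule measurable_Pair[OF measurable_fst measurable_compose[OF measurable_snd measurable_snd]])
      have r: "(\<lambda>y. rep t (fst y) (snd (snd y))) \<in> ?M \<rightarrow>\<^sub>M PM"
        using measurable_compose[OF a rep_meas[of t]] by simp
      show ?thesis unfolding N_def
        by (rule measurable_Pair[OF measurable_compose[OF r c_meas'] measurable_compose[OF r P_meas']])
    qed
    have g0: "(\<lambda>y. fst (snd y)) \<in> ?M \<rightarrow>\<^sub>M Tm"
      by (rule measurable_compose[OF measurable_snd measurable_fst])
    have g: "(\<lambda>y. fst (snd y)) \<in> ?M \<rightarrow>\<^sub>M count_space UNIV"
      using g0 by (subst (asm) measurable_cong_sets[OF refl Tm_sets])
    have "(\<lambda>y. (\<lambda>t y. (c t (rep t (fst y) (snd (snd y))), P t (rep t (fst y) (snd (snd y))))) (fst (snd y)) y) \<in> ?M \<rightarrow>\<^sub>M N"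
      by (rule measurable_compose_countable'[OF each g]) simp
    moreover have "(\<lambda>(e, z). \<Phi> e z) = (\<lambda>y. (\<lambda>t y. (c t (rep t (fst y) (snd (snd y))), P t (rep t (fst y) (snd (snd y))))) (fst (snd y)) y)"
      by (simp add: \<Phi>_def fun_eq_iff split_beta')
    ultimately show ?thesis by simp
  qed
  have \<Phi>e_meas: "\<Phi> e \<in> Tm \<Otimes>\<^sub>M PM \<rightarrow>\<^sub>M N" if "e \<in> space ES" for e
    using measurable_compose[OF measurable_Pair1'[OF that] \<Phi>_meas] by simp
  have \<kappa>_meas: "\<kappa> \<in> ES \<rightarrow>\<^sub>M prob_algebra N"
  proof -
    have "(\<lambda>e. distr ((\<lambda>_. Tm \<Otimes>\<^sub>M PM) e) N (\<Phi> e)) \<in> ES \<rightarrow>\<^sub>M prob_algebra N"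
    proof (rule measurable_distr_prob_space2)
      show "(\<lambda>_. Tm \<Otimes>\<^sub>M PM) \<in> ES \<rightarrow>\<^sub>M prob_algebra (Tm \<Otimes>\<^sub>M PM)"
        by (rule measurable_const) (simp add: space_prob_algebra TPp)
      show "(\<lambda>(x, y). \<Phi> x y) \<in> ES \<Otimes>\<^sub>M (Tm \<Otimes>\<^sub>M PM) \<rightarrow>\<^sub>M N" by (rule \<Phi>_meas)
    qed
    then show ?thesis by (simp add: \<kappa>_def)
  qed
  have rep_sp: "rep t e \<omega> \<in> space PM" if "e \<in> space ES" "\<omega> \<in> space PM" for t e \<omega>
    using measurable_space[OF rep_meas[of t], of "(e, \<omega>)"] that by (simp add: space_pair_measure)
  have \<kappa>_AE: "\<forall>e\<in>space ES. AE cp in \<kappa> e. fst cp \<le> S \<and> 0 \<le> snd cp \<and> snd cp \<le> Ppeak"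
  proof
    fix e assume e: "e \<in> space ES"
    have set: "{cp \<in> space N. fst cp \<le> S \<and> 0 \<le> snd cp \<and> snd cp \<le> Ppeak} \<in> sets N"
      unfolding N_def by measurable
    have "AE z in Tm \<Otimes>\<^sub>M PM. fst (\<Phi> e z) \<le> S \<and> 0 \<le> snd (\<Phi> e z) \<and> snd (\<Phi> e z) \<le> Ppeak"
    proof (rule AE_I2)
      fix z assume "z \<in> space (Tm \<Otimes>\<^sub>M PM)"
      then have "snd z \<in> space PM" by (simp add: space_pair_measure mem_Times_iff)
      then have "rep (fst z) e (snd z) \<in> space PM" by (rule rep_sp[OF e])
      then show "fst (\<Phi> e z) \<le> S \<and> 0 \<le> snd (\<Phi> e z) \<and> snd (\<Phi> e z) \<le> Ppeak"
        using cP_rng by (simp add: \<Phi>_def)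
    qed
    then show "AE cp in \<kappa> e. fst cp \<le> S \<and> 0 \<le> snd cp \<and> snd cp \<le> Ppeak"
      unfolding \<kappa>_def by (subst AE_distr_iff[OF \<Phi>e_meas[OF e] set]) simp
  qed
  have est_w: "est_of S w \<in> space ES" if "w \<in> space SM" for w
    unfolding ES_eq space_PiM est_of_def using h_sp[OF that] by auto
  have caus': "c t (rep t (est_of S w) \<omega>) = c t (fun_upd \<omega> t w) \<and> P t (rep t (est_of S w) \<omega>) = P t (fun_upd \<omega> t w)"
    if w: "w \<in> space SM" and \<omega>: "\<omega> \<in> space PM" for t w \<omega>
  proof -
    have sp1: "rep t (est_of S w) \<omega> \<in> space PM" by (rule rep_sp[OF est_w[OF w] \<omega>])
    have sp2: "fun_upd \<omega> t w \<in> space PM" using \<omega> w unfolding spPM by (auto simp: PiE_iff)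
    have past: "\<forall>\<tau><t. rep t (est_of S w) \<omega> \<tau> = fun_upd \<omega> t w \<tau>" by (simp add: rep_def)
    have est: "est_of S (rep t (est_of S w) \<omega> t) = est_of S (fun_upd \<omega> t w t)"
      by (simp add: rep_def est_of_def fun_eq_iff)
    show ?thesis using caus sp1 sp2 past est by blast
  qed
  have key: "(\<integral>w. (\<integral>cp. g w cp \<partial>\<kappa> (est_of S w)) \<partial>SM) = (\<integral>\<omega>. 1 / real T * (\<Sum>t<T. g (\<omega> t) (c t \<omega>, P t \<omega>)) \<partial>PM)"
    if g_meas: "\<And>w. w \<in> space SM \<Longrightarrow> g w \<in> borel_measurable N"
    and g_bd: "\<And>w. w \<in> space SM \<Longrightarrow> \<exists>B. \<forall>cp. fst cp \<le> S \<and> 0 \<le> snd cp \<and> snd cp \<le> Ppeak \<longrightarrow> \<bar>g w cp\<bar> \<le> B"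
    and G_int: "\<And>t. integrable PM (\<lambda>\<omega>. g (\<omega> t) (c t \<omega>, P t \<omega>))"
    for g :: "(nat \<Rightarrow> 'h \<times> 'e) \<Rightarrow> nat \<times> real \<Rightarrow> real"
  proof -
    define G where "G = (\<lambda>t \<omega>. g (\<omega> t) (c t \<omega>, P t \<omega>))"
    have inner: "(\<integral>cp. g w cp \<partial>\<kappa> (est_of S w)) = (\<Sum>t<T. \<integral>\<omega>. G t (fun_upd \<omega> t w) \<partial>PM) / real T"
      if w: "w \<in> space SM" for w
    proof -
      let ?e = "est_of S w"
      have e: "?e \<in> space ES" by (rule est_w[OF w])
      obtain B where B: "\<forall>cp. fst cp \<le> S \<and> 0 \<le> snd cp \<and> snd cp \<le> Ppeak \<longrightarrow> \<bar>g w cp\<bar> \<le> B"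
        using g_bd[OF w] by blast
      have int: "integrable (Tm \<Otimes>\<^sub>M PM) (\<lambda>z. g w (\<Phi> ?e z))"
      proof (rule TP.P.integrable_const_bound[where B=B])
        show "AE z in Tm \<Otimes>\<^sub>M PM. norm (g w (\<Phi> ?e z)) \<le> B"
        proof (rule AE_I2)
          fix z assume "z \<in> space (Tm \<Otimes>\<^sub>M PM)"
          then have "snd z \<in> space PM" by (simp add: space_pair_measure mem_Times_iff)
          then have "rep (fst z) ?e (snd z) \<in> space PM" by (rule rep_sp[OF e])
          then show "norm (g w (\<Phi> ?e z)) \<le> B"
            using cP_rng B by (simp add: \<Phi>_def)
        qed
        show "(\<lambda>z. g w (\<Phi> ?e z)) \<in> borel_measurable (Tm \<Otimes>\<^sub>M PM)"
          using measurable_compose[OF \<Phi>e_meas[OF e] g_meas[OF w]] by simp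
      qed
      have "(\<integral>cp. g w cp \<partial>\<kappa> ?e) = (\<integral>z. g w (\<Phi> ?e z) \<partial>(Tm \<Otimes>\<^sub>M PM))"
        unfolding \<kappa>_def by (rule integral_distr[OF \<Phi>e_meas[OF e] g_meas[OF w]])
      also have "\<dots> = (\<integral>t. (\<integral>\<omega>. g w (\<Phi> ?e (t, \<omega>)) \<partial>PM) \<partial>Tm)"
        using TP.integral_fst'[OF int] by simp
      also have "\<dots> = (\<Sum>t<T. (\<integral>\<omega>. g w (\<Phi> ?e (t, \<omega>)) \<partial>PM)) / real T"
        unfolding Tm_def using T1 by (subst integral_pmf_of_set) (auto simp: lessThan_empty_iff)
      also have "\<dots> = (\<Sum>t<T. \<integral>\<omega>. G t (fun_upd \<omega> t w) \<partial>PM) / real T"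
      proof -
        have pt: "g w (\<Phi> ?e (t, \<omega>)) = G t (fun_upd \<omega> t w)" if "\<omega> \<in> space PM" for t \<omega>
          using caus'[OF w that, of t] by (simp add: \<Phi>_def G_def)
        have "(\<integral>\<omega>. g w (\<Phi> ?e (t, \<omega>)) \<partial>PM) = (\<integral>\<omega>. G t (fun_upd \<omega> t w) \<partial>PM)" for t
          by (rule Bochner_Integration.integral_cong[OF refl pt])
        then show ?thesis by simp
      qed
      finally show ?thesis .
    qed
    have upd_meas: "(\<lambda>(x, X). fun_upd X t x) \<in> SM \<Otimes>\<^sub>M PM \<rightarrow>\<^sub>M PM" for t
      using meas_upd[of t SM] by (simp add: PM_eq SM_eq)
    have D: "distr (SM \<Otimes>\<^sub>M PM) PM (\<lambda>(x, X). fun_upd X t x) = PM" for t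
      using distr_pair_PiM_eq_PiM[of UNIV "\<lambda>_. SM" t] SM.prob_space_axioms
      by (simp add: PM_eq SM_eq)
    have G_meas: "G t \<in> borel_measurable PM" for t
      using G_int[of t] unfolding G_def by blast
    have Gupd_int: "integrable (SM \<Otimes>\<^sub>M PM) (\<lambda>y. G t (case y of (x, X) \<Rightarrow> fun_upd X t x))" for t
      using integrable_distr_eq[OF upd_meas[of t] G_meas[of t]] G_int[of t] D[of t] by (simp add: G_def)
    have Gupd_eq: "(\<integral>w. (\<integral>\<omega>. G t (fun_upd \<omega> t w) \<partial>PM) \<partial>SM) = (\<integral>\<omega>. G t \<omega> \<partial>PM)" for t
    proof -
      have "(\<integral>w. (\<integral>\<omega>. G t (fun_upd \<omega> t w) \<partial>PM) \<partial>SM) = (\<integral>y. G t (case y of (x, X) \<Rightarrow> fun_upd X t x) \<partial>(SM \<Otimes>\<^sub>M PM))"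
        using SP.integral_fst'[OF Gupd_int[of t]] by simp
      also have "\<dots> = (\<integral>\<omega>. G t \<omega> \<partial>distr (SM \<Otimes>\<^sub>M PM) PM (\<lambda>(x, X). fun_upd X t x))"
        by (rule integral_distr[OF upd_meas[of t] G_meas[of t], symmetric])
      also have "\<dots> = (\<integral>\<omega>. G t \<omega> \<partial>PM)" by (simp only: D)
      finally show ?thesis .
    qed
    have F_int: "integrable SM (\<lambda>w. \<integral>\<omega>. G t (fun_upd \<omega> t w) \<partial>PM)" for t
      using SP.integrable_fst'[OF Gupd_int[of t]] by simp
    have "(\<integral>w. (\<integral>cp. g w cp \<partial>\<kappa> (est_of S w)) \<partial>SM) = (\<integral>w. (\<Sum>t<T. \<integral>\<omega>. G t (fun_upd \<omega> t w) \<partial>PM) / real T \<partial>SM)"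
      by (rule Bochner_Integration.integral_cong[OF refl inner])
    also have "\<dots> = (\<Sum>t<T. (\<integral>w. (\<integral>\<omega>. G t (fun_upd \<omega> t w) \<partial>PM) \<partial>SM)) / real T"
      using F_int by (simp add: Bochner_Integration.integral_sum)
    also have "\<dots> = (\<Sum>t<T. \<integral>\<omega>. G t \<omega> \<partial>PM) / real T" using Gupd_eq by simp
    also have "\<dots> = (\<integral>\<omega>. 1 / real T * (\<Sum>t<T. G t \<omega>) \<partial>PM)"
      using G_int by (simp add: Bochner_Integration.integral_sum G_def)
    finally show ?thesis by (simp add: G_def)
  qed
  have keyY: "(\<integral>w. (\<integral>cp. (if fst cp = s then I (fst (w s)) (snd cp) * real K else 0) \<partial>\<kappa> (est_of S w)) \<partial>SM)
      = (\<integral>\<omega>. 1 / real T * (\<Sum>t<T. Y s t \<omega>) \<partial>PM)" if s: "s \<in> {1..S}" for s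
  proof -
    have "(\<integral>w. (\<integral>cp. (if fst cp = s then I (fst (w s)) (snd cp) * real K else 0) \<partial>\<kappa> (est_of S w)) \<partial>SM)
      = (\<integral>\<omega>. 1 / real T * (\<Sum>t<T. (\<lambda>w cp. if fst cp = s then I (fst (w s)) (snd cp) * real K else 0) (\<omega> t) (c t \<omega>, P t \<omega>)) \<partial>PM)"
    proof (rule key)
      fix w assume w: "w \<in> space SM"
      have h: "fst (w s) \<in> space H" by (rule h_sp[OF w s])
      have Ih: "I (fst (w s)) \<in> borel_measurable borel"
        using measurable_compose[OF measurable_Pair1'[OF h] I_meas] by simp
      have A: "{cp \<in> space N. fst cp = s} \<in> sets N" unfolding N_def by measurable
      have B: "(\<lambda>cp. I (fst (w s)) (snd cp) * real K) \<in> borel_measurable N"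
        using measurable_compose[OF measurable_snd Ih] unfolding N_def by (intro borel_measurable_times) auto
      show "(\<lambda>cp. if fst cp = s then I (fst (w s)) (snd cp) * real K else 0) \<in> borel_measurable N"
        by (rule measurable_If[OF B borel_measurable_const A])
      show "\<exists>B. \<forall>cp. fst cp \<le> S \<and> 0 \<le> snd cp \<and> snd cp \<le> Ppeak \<longrightarrow>
          \<bar>if fst cp = s then I (fst (w s)) (snd cp) * real K else 0\<bar> \<le> B"
      proof (intro exI allI impI)
        fix cp :: "nat \<times> real" assume cp: "fst cp \<le> S \<and> 0 \<le> snd cp \<and> snd cp \<le> Ppeak"
        have "0 \<le> I (fst (w s)) (snd cp)" "I (fst (w s)) (snd cp) \<le> I (fst (w s)) Ppeak"
          using I_nn[OF h] I_le[OF h] cp by auto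
        then show "\<bar>if fst cp = s then I (fst (w s)) (snd cp) * real K else 0\<bar> \<le> I (fst (w s)) Ppeak * real K"
          using I_nn[OF h, of Ppeak] Ppeak by (auto intro!: mult_right_mono)
      qed
    next
      fix t
      show "integrable PM (\<lambda>\<omega>. (\<lambda>w cp. if fst cp = s then I (fst (w s)) (snd cp) * real K else 0) (\<omega> t) (c t \<omega>, P t \<omega>))"
      proof -
        have "(\<lambda>\<omega>. (\<lambda>w cp. if fst cp = s then I (fst (w s)) (snd cp) * real K else 0) (\<omega> t) (c t \<omega>, P t \<omega>)) = Y s t"
          by (simp add: fun_eq_iff Y_def)
        then show ?thesis using Y_int[OF s, of t] by simp
      qed
    qed
    then show ?thesis by (simp add: Y_def cong: if_cong)
  qed
  have keyP: "(\<integral>w. (\<integral>cp. snd cp \<partial>\<kappa> (est_of S w)) \<partial>SM) = (\<integral>\<omega>. 1 / real T * (\<Sum>t<T. P t \<omega>) \<partial>PM)"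
  proof -
    have "(\<integral>w. (\<integral>cp. snd cp \<partial>\<kappa> (est_of S w)) \<partial>SM)
      = (\<integral>\<omega>. 1 / real T * (\<Sum>t<T. (\<lambda>w cp. snd cp) (\<omega> t) (c t \<omega>, P t \<omega>)) \<partial>PM)"
    proof (rule key)
      show "(\<lambda>cp. snd cp) \<in> borel_measurable N" for w unfolding N_def by simp
      show "\<exists>B. \<forall>cp. fst cp \<le> S \<and> 0 \<le> snd cp \<and> snd cp \<le> Ppeak \<longrightarrow> \<bar>snd cp\<bar> \<le> B" for w
        by (intro exI[of _ Ppeak]) auto
      show "integrable PM (\<lambda>\<omega>. (\<lambda>w cp. snd cp) (\<omega> t) (c t \<omega>, P t \<omega>))" for t
        using P_int[of t] by simp
    qed
    then show ?thesis by simp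
  qed
  show ?thesis
  proof (intro exI conjI)
    show "\<kappa> \<in> est_space S E \<rightarrow>\<^sub>M prob_algebra (count_space UNIV \<Otimes>\<^sub>M borel)"
      using \<kappa>_meas by (simp add: ES_def N_def)
    show "\<forall>e\<in>space (est_space S E). AE cp in \<kappa> e. fst cp \<le> S \<and> 0 \<le> snd cp \<and> snd cp \<le> Ppeak"
      using \<kappa>_AE by (simp add: ES_def)
    show "\<forall>s\<in>{1..S}. 0 \<le> x s \<and> x s \<le> Dm s" by (rule x_rng)
    show "(SUP x\<in>?L. ?f x) \<le> ?f x + \<delta>" using xU by simp
    show "\<forall>s\<in>{1..S}. x s \<le>
        (\<integral>w. (\<integral>cp. (if fst cp = s then I (fst (w s)) (snd cp) * real K else 0) \<partial>\<kappa> (est_of S w))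
           \<partial>slot_meas S \<mu>) + \<delta>"
      using keyY T_s unfolding SM_def by fastforce
    show "(\<integral>w. (\<integral>cp. snd cp \<partial>\<kappa> (est_of S w)) \<partial>slot_meas S \<mu>) \<le> Pav + \<delta>"
      using keyP T_P unfolding SM_def by simp
  qed
qed

end
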